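(* Let $\varphi\in C(\overline{\mathbb D})$ satisfy $\operatorname{Re}\varphi(z)\ge|\operatorname{Im}\varphi(z)|^2$ for all $z\in\mathbb D$. Then $B(\varphi)$ extends continuously to $\overline{\mathbb D}$; if there is $\delta>0$ such that $|B(\varphi)(z)|\ge\delta$ for all $z\in\partial\mathbb D$ (for this continuous extension), then $B(\varphi)$ is invertible as an element of $L^\infty(\mathbb D)$, i.e. $\inf_{z\in\mathbb D}|B(\varphi)(z)|>0$.
   Context: $\mathbb D$ is the open unit disc, $dA$ normalized area measure, $k_z(w)=\frac{1-|z|^2}{(1-w\bar z)^2}$, and $B(g)(z)=\int_{\mathbb D}|k_z(w)|^2g(w)\,dA(w)$ is the Berezin transform. *)

theory Defs
  imports "HOL-Analysis.Analysis"
begin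

definition bergman_k :: "complex \<Rightarrow> complex \<Rightarrow> complex" where
  "bergman_k z w = complex_of_real (1 - (cmod z)^2) / (1 - w * cnj z)^2"

text \<open>Berezin transform with respect to normalized area measure dA = (1/pi) dx dy on the unit disc.\<close>
definition berezin :: "(complex \<Rightarrow> complex) \<Rightarrow> complex \<Rightarrow> complex" where
  "berezin g z = integral (ball 0 1)
      (\<lambda>w. complex_of_real ((cmod (bergman_k z w))^2 / pi) * g w)"

end

theory Submission imports Defs "HOL-Complex_Analysis.Complex_Analysis" begin

definition c2 :: "real^2 \<Rightarrow> complex" where "c2 v = Complex (v$1) (v$2)"
definition c2i :: "complex \<Rightarrow> real^2" where "c2i z = (\<chi> i. if i = 1 then Re z else Im z)"
lemma c2_c2i[simp]: "c2 (c2i z) = z" by (simp add: c2_def c2i_def complex_eq_iff)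
lemma c2i_c2[simp]: "c2i (c2 v) = v"
  by (simp add: c2_def c2i_def vec_eq_iff forall_2)
lemma bl_c2: "bounded_linear c2"
  by (simp add: linear_conv_bounded_linear[symmetric]) (rule linearI; simp add: c2_def complex_eq_iff)
lemma bl_c2i: "bounded_linear c2i"
  by (simp add: linear_conv_bounded_linear[symmetric]) (rule linearI; simp add: c2i_def vec_eq_iff)
lemma norm_c2[simp]: "norm (c2 v) = norm v"
  by (simp add: c2_def norm_vec_def L2_set_def sum_2 cmod_def)
lemma norm_c2i[simp]: "norm (c2i z) = norm z"
  by (metis c2_c2i norm_c2)
lemma c2_cbox: "c2 ` cbox u v = cbox (c2 u) (c2 v)"
proof -
  have "x \<in> c2 ` cbox u v \<longleftrightarrow> x \<in> cbox (c2 u) (c2 v)" for x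
  proof -
    have "x \<in> c2 ` cbox u v \<longleftrightarrow> c2i x \<in> cbox u v"
      by (metis c2_c2i c2i_c2 image_iff)
    then show ?thesis by (simp add: mem_box_cart cbox_complex_eq forall_2 c2_def c2i_def)
  qed
  then show ?thesis by blast
qed
lemma c2i_cbox: "c2i ` cbox u v = cbox (c2i u) (c2i v)"
proof -
  have "x \<in> c2i ` cbox u v \<longleftrightarrow> x \<in> cbox (c2i u) (c2i v)" for x
  proof -
    have "x \<in> c2i ` cbox u v \<longleftrightarrow> c2 x \<in> cbox u v"
      by (metis c2_c2i c2i_c2 image_iff)
    then show ?thesis by (simp add: mem_box_cart cbox_complex_eq forall_2 c2_def c2i_def)
  qed
  then show ?thesis by blast
qed
lemma content_c2: "Henstock_Kurzweil_Integration.content (c2 ` cbox u v) = Henstock_Kurzweil_Integration.content (cbox u v)"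
proof -
  have e1: "cbox u v = {} \<longleftrightarrow> v$1<u$1 \<or> v$2<u$2"
  proof -
    have ex2: "(\<exists>i::2. P i) \<longleftrightarrow> P 1 \<or> P 2" for P by (metis exhaust_2)
    show ?thesis unfolding interval_eq_empty_cart ex2 ..
  qed
  have e2: "cbox (c2 u) (c2 v) = {} \<longleftrightarrow> v$1<u$1 \<or> v$2<u$2"
    by (auto simp: box_eq_empty Basis_complex_def c2_def)
  show ?thesis unfolding c2_cbox
    apply (subst content_cbox_if, subst content_cbox_if_cart)
    unfolding e1 e2 by (simp add: Basis_complex_def c2_def UNIV_2)
qed
lemma content_c2i: "Henstock_Kurzweil_Integration.content (c2i ` cbox u v) = Henstock_Kurzweil_Integration.content (cbox u v)"
  by (metis c2_c2i c2_cbox c2i_cbox content_c2)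


lemma has_integral_iso:
  fixes f :: "'a::euclidean_space \<Rightarrow> 'c::banach" and g :: "'b::euclidean_space \<Rightarrow> 'a" and h :: "'a \<Rightarrow> 'b"
  assumes hg: "\<And>x. h (g x) = x" and gh: "\<And>x. g (h x) = x"
    and cg: "\<And>x. continuous (at x) g"
    and gbox: "\<And>u v. \<exists>w z. g ` cbox u v = cbox w z"
    and hbox: "\<And>u v. \<exists>w z. h ` cbox u v = cbox w z"
    and cont: "\<And>u v. Henstock_Kurzweil_Integration.content (g ` cbox u v) = Henstock_Kurzweil_Integration.content (cbox u v)"
    and nh: "\<And>x. norm (h x) = norm x"
    and f: "(f has_integral i) S"
  shows "((\<lambda>x. f (g x)) has_integral i) (h ` S)"
proof (rule has_integral'[THEN iffD2], intro allI impI)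
  fix e :: real assume e: "e > 0"
  have "\<exists>B>0. \<forall>a b. ball 0 B \<subseteq> cbox a b \<longrightarrow>
      (\<exists>z. ((\<lambda>x. if x \<in> S then f(x) else 0) has_integral z) (cbox a b) \<and> norm(z - i) < e)"
    using f[THEN has_integral'[THEN iffD1], rule_format, OF e] .
  then obtain B where B: "B > 0"
    and HB: "\<forall>a b. ball 0 B \<subseteq> cbox a b \<longrightarrow>
      (\<exists>z. ((\<lambda>x. if x \<in> S then f(x) else 0) has_integral z) (cbox a b) \<and> norm(z - i) < e)"
    by (elim exE conjE)
  show "\<exists>B>0. \<forall>a b. ball 0 B \<subseteq> cbox a b \<longrightarrow>
      (\<exists>z. ((\<lambda>x. if x \<in> h ` S then f (g x) else 0) has_integral z) (cbox a b) \<and> norm(z - i) < e)"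
  proof (intro exI[of _ B] conjI allI impI B)
    fix a b :: 'b assume ab: "ball 0 B \<subseteq> cbox a b"
    obtain w z' where gb: "g ` cbox a b = cbox w z'" using gbox[of a b] by (elim exE)
    have "ball 0 B \<subseteq> cbox w z'"
    proof
      fix x :: 'a assume "x \<in> ball 0 B"
      then have "h x \<in> ball 0 B" by (simp add: nh)
      then have "h x \<in> cbox a b" using ab by (rule subsetD[rotated])
      then have "g (h x) \<in> g ` cbox a b" by (rule imageI)
      then show "x \<in> cbox w z'" unfolding gh gb .
    qed
    then have "\<exists>z. ((\<lambda>x. if x \<in> S then f(x) else 0) has_integral z) (cbox w z') \<and> norm(z - i) < e"
      using HB by (elim allE impE)
    then obtain z where z: "((\<lambda>x. if x \<in> S then f(x) else 0) has_integral z) (cbox w z')"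
      and nz: "norm (z - i) < e" by (elim exE conjE)
    have "((\<lambda>x. (\<lambda>x. if x \<in> S then f(x) else 0) (g x)) has_integral (1/1) *\<^sub>R z) (h ` cbox w z')"
      by (rule has_integral_twiddle[OF _ hg gh cg gbox hbox _ z]) (simp_all add: cont)
    moreover have "h ` cbox w z' = cbox a b"
      unfolding gb[symmetric] image_image hg by simp
    moreover have "(g x \<in> S) \<longleftrightarrow> x \<in> h ` S" for x :: 'b
    proof
      assume "g x \<in> S" then have "h (g x) \<in> h ` S" by (rule imageI)
      then show "x \<in> h ` S" unfolding hg .
    next
      assume "x \<in> h ` S" then obtain y where "y \<in> S" "x = h y" by (elim imageE)
      then show "g x \<in> S" by (simp add: gh)
    qed
    ultimately have "((\<lambda>x. if x \<in> h ` S then f (g x) else 0) has_integral z) (cbox a b)"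
      by simp
    then show "\<exists>z. ((\<lambda>x. if x \<in> h ` S then f (g x) else 0) has_integral z) (cbox a b) \<and> norm(z - i) < e"
      using nz by (intro exI[of _ z] conjI)
  qed
qed

lemma has_integral_c2:
  fixes F :: "real^2 \<Rightarrow> 'c::banach"
  assumes "(F has_integral i) T"
  shows "((\<lambda>z. F (c2i z)) has_integral i) (c2 ` T)"
proof (rule has_integral_iso[OF _ _ _ _ _ _ _ assms])
  show "continuous (at x) c2i" for x
    using bl_c2i linear_continuous_at by blast
  show "\<exists>w z. c2i ` cbox u v = cbox w z" for u v unfolding c2i_cbox by (rule exI, rule exI, rule refl)
  show "\<exists>w z. c2 ` cbox u v = cbox w z" for u v unfolding c2_cbox by (rule exI, rule exI, rule refl)
qed (simp_all add: content_c2i)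

lemma det_mult_c2: "det (matrix (\<lambda>h. c2i (d * c2 h))) = (cmod d)^2"
  apply (simp add: det_2 matrix_def c2_def c2i_def axis_def cmod_power2)
  by (simp add: power2_eq_square)


lemma c2_ball: "c2 ` ball 0 r = ball 0 r"
proof -
  have "x \<in> c2 ` ball 0 r \<longleftrightarrow> c2i x \<in> ball 0 r" for x by (metis c2_c2i c2i_c2 image_iff)
  then show ?thesis by auto
qed
lemma c2i_ball: "c2i ` ball 0 r = ball 0 r"
proof -
  have "x \<in> c2i ` ball 0 r \<longleftrightarrow> c2 x \<in> ball 0 r" for x by (metis c2_c2i c2i_c2 image_iff)
  then show ?thesis by auto
qed

lemma moeb_deriv:
  assumes "norm z < 1" "norm w < 1"
  shows "(Moebius_function 0 z has_field_derivative complex_of_real (1 - (cmod z)^2) / (1 - cnj z * w)^2) (at w)"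
proof -
  have nz: "1 - cnj z * w \<noteq> 0"
    by (metis assms complex_mod_cnj mult_less_cancel_right1 norm_ge_zero norm_mult norm_one
        order.asym right_minus_eq mult.commute less_trans mult_less_cancel_left1 not_less)
  have cz: "cnj z * z = complex_of_real ((cmod z)^2)"
    by (metis complex_norm_square mult.commute of_real_power)
  have D1: "((\<lambda>w. w - z) has_field_derivative 1) (at w)"
    by (auto intro!: derivative_eq_intros)
  have D2: "((\<lambda>w. 1 - cnj z * w) has_field_derivative (- cnj z)) (at w)"
    by (auto intro!: derivative_eq_intros)
  have "((\<lambda>w. (w - z) / (1 - cnj z * w)) has_field_derivative
      (1 * (1 - cnj z * w) - (w - z) * (- cnj z)) / ((1 - cnj z * w) * (1 - cnj z * w))) (at w)"
    by (rule DERIV_divide[OF D1 D2 nz])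
  moreover have "(1 * (1 - cnj z * w) - (w - z) * (- cnj z)) / ((1 - cnj z * w) * (1 - cnj z * w))
     = complex_of_real (1 - (cmod z)^2) / (1 - cnj z * w)^2"
  proof -
    have "1 * (1 - cnj z * w) - (w - z) * (- cnj z) = 1 - cnj z * z" by (simp add: algebra_simps)
    then show ?thesis by (simp only: cz power2_eq_square of_real_diff of_real_1)
  qed
  ultimately show ?thesis unfolding Moebius_function_simple[abs_def] by (simp only:)
qed

lemma kernel_integral_real2:
  fixes z :: complex assumes z: "norm z < 1"
  shows "((\<lambda>x. (cmod (complex_of_real (1 - (cmod z)^2) / (1 - cnj z * c2 x)^2))^2) has_integral pi) (ball (0::real^2) 1)"
proof -
  define M where "M = Moebius_function 0 z"
  define d where "d w = complex_of_real (1 - (cmod z)^2) / (1 - cnj z * w)^2" for w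
  define g where "g x = c2i (M (c2 x))" for x
  define S where "S = ball (0::real^2) 1"
  have Mb: "M w \<in> ball 0 1" if "w \<in> ball 0 1" for w
    using that z Moebius_function_norm_lt_1 by (simp add: M_def)
  have MM: "Moebius_function 0 (-z) (M w) = w" if "w \<in> ball 0 1" for w
    using that z Moebius_function_compose[of "-z" z w] by (simp add: M_def)
  have MM': "M (Moebius_function 0 (-z) w) = w" if "w \<in> ball 0 1" for w
    using that z Moebius_function_compose[of z "-z" w] by (simp add: M_def)
  have Mb': "Moebius_function 0 (-z) w \<in> ball 0 1" if "w \<in> ball 0 1" for w
    using that z Moebius_function_norm_lt_1[of "-z" w 0] by simp
  have der: "(g has_derivative (\<lambda>h. c2i (d (c2 x) * c2 h))) (at x within S)" if "x \<in> S" for x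
  proof -
    have "c2 x \<in> ball 0 1" using that by (simp add: S_def)
    then have dM: "(M has_derivative (*) (d (c2 x))) (at (c2 x))"
      using moeb_deriv[OF z, of "c2 x"] by (simp add: has_field_derivative_def M_def d_def)
    have "((M \<circ> c2) has_derivative ((*) (d (c2 x)) \<circ> c2)) (at x)"
      by (rule diff_chain_at[OF bounded_linear_imp_has_derivative[OF bl_c2] dM])
    then have "((c2i \<circ> (M \<circ> c2)) has_derivative (c2i \<circ> ((*) (d (c2 x)) \<circ> c2))) (at x)"
      by (rule diff_chain_at[OF _ bounded_linear_imp_has_derivative[OF bl_c2i]])
    then have "((\<lambda>x. c2i (M (c2 x))) has_derivative (\<lambda>h. c2i (d (c2 x) * c2 h))) (at x)"
      unfolding o_def .
    then have "((\<lambda>x. c2i (M (c2 x))) has_derivative (\<lambda>h. c2i (d (c2 x) * c2 h))) (at x within S)"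
      by (rule has_derivative_at_withinI)
    moreover have "g = (\<lambda>x. c2i (M (c2 x)))" by (rule ext) (simp add: g_def)
    ultimately show ?thesis by (simp only:)
  qed
  have inj: "inj_on g S"
  proof (rule inj_onI)
    fix x y assume "x \<in> S" "y \<in> S" "g x = g y"
    have xy: "c2 x \<in> ball 0 1" "c2 y \<in> ball 0 1"
      using \<open>x \<in> S\<close> \<open>y \<in> S\<close> by (simp_all add: S_def)
    have "c2 (c2i (M (c2 x))) = c2 (c2i (M (c2 y)))"
      using \<open>g x = g y\<close> unfolding g_def by (rule arg_cong)
    then have e: "M (c2 x) = M (c2 y)" by (simp only: c2_c2i)
    have "c2 x = Moebius_function 0 (-z) (M (c2 x))" using MM[OF xy(1)] by (rule sym)
    also have "\<dots> = Moebius_function 0 (-z) (M (c2 y))" by (simp only: e)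
    also have "\<dots> = c2 y" using MM[OF xy(2)] .
    finally have "c2 x = c2 y" .
    then show "x = y" by (metis c2i_c2)
  qed
  have gS: "g ` S = S"
  proof
    show "g ` S \<subseteq> S" using Mb by (auto simp: g_def S_def)
    show "S \<subseteq> g ` S"
    proof
      fix x assume "x \<in> S"
      then have x: "c2 x \<in> ball 0 1" by (simp add: S_def)
      have "g (c2i (Moebius_function 0 (-z) (c2 x))) = x"
        unfolding g_def by (simp only: c2_c2i MM'[OF x] c2i_c2)
      moreover have "c2i (Moebius_function 0 (-z) (c2 x)) \<in> S"
        using Mb'[OF x] by (simp add: S_def)
      ultimately show "x \<in> g ` S" by (rule image_eqI[OF sym])
    qed
  qed
  have Sleb: "S \<in> sets lebesgue" unfolding S_def by (simp add: fmeasurableD)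
  have mS: "measure lborel S = pi"
    unfolding S_def by (simp add: content_ball unit_ball_vol_2)
  have f0: "((\<lambda>x. 1::real) has_integral pi) S"
    using has_integral_measure_lborel[of S] mS Sleb emeasure_bounded_finite[of S] by (auto simp: S_def)
  have f1: "((\<lambda>x. 1 *\<^sub>R (vec 1 :: real^1)) has_integral pi *\<^sub>R vec 1) S"
    by (rule has_integral_scaleR_left[OF f0])
  have "(\<lambda>x. vec 1 :: real^1) absolutely_integrable_on (g ` S) \<and> integral (g ` S) (\<lambda>x. vec 1 :: real^1) = vec pi"
  proof
    show "(\<lambda>x. vec 1 :: real^1) absolutely_integrable_on (g ` S)"
      unfolding gS absolutely_integrable_on_1_iff
      by (rule nonnegative_absolutely_integrable_1) (use f0 has_integral_integrable in auto)
    show "integral (g ` S) (\<lambda>x. vec 1 :: real^1) = vec pi"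
      unfolding gS using f1 by (simp add: integral_unique vec_eq_iff)
  qed
  moreover have CV: "((\<lambda>x. \<bar>det (matrix (\<lambda>h. c2i (d (c2 x) * c2 h)))\<bar> *\<^sub>R (vec 1 :: real^1)) absolutely_integrable_on S \<and>
     integral S (\<lambda>x. \<bar>det (matrix (\<lambda>h. c2i (d (c2 x) * c2 h)))\<bar> *\<^sub>R (vec 1 :: real^1)) = vec pi)
   \<longleftrightarrow> ((\<lambda>x. vec 1 :: real^1) absolutely_integrable_on (g ` S) \<and> integral (g ` S) (\<lambda>x. vec 1 :: real^1) = vec pi)"
    by (rule has_absolute_integral_change_of_variables[OF Sleb _ inj]) (erule der)
  ultimately have AI: "(\<lambda>x. \<bar>det (matrix (\<lambda>h. c2i (d (c2 x) * c2 h)))\<bar> *\<^sub>R (vec 1 :: real^1)) absolutely_integrable_on S \<and>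
     integral S (\<lambda>x. \<bar>det (matrix (\<lambda>h. c2i (d (c2 x) * c2 h)))\<bar> *\<^sub>R (vec 1 :: real^1)) = vec pi"
    by (simp only:)
  have eqd: "\<bar>det (matrix (\<lambda>h. c2i (d (c2 x) * c2 h)))\<bar> = (cmod (d (c2 x)))^2" for x
    unfolding det_mult_c2 by simp
  have AI2: "(\<lambda>x. (cmod (d (c2 x)))^2 *\<^sub>R (vec 1 :: real^1)) absolutely_integrable_on S"
     "integral S (\<lambda>x. (cmod (d (c2 x)))^2 *\<^sub>R (vec 1 :: real^1)) = vec pi"
    using AI unfolding eqd by auto
  have "((\<lambda>x. (cmod (d (c2 x)))^2 *\<^sub>R (vec 1 :: real^1)) has_integral vec pi) S"
  proof -
    have "(\<lambda>x. (cmod (d (c2 x)))^2 *\<^sub>R (vec 1 :: real^1)) integrable_on S"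
      using AI2(1) by (simp add: absolutely_integrable_on_def)
    from integrable_integral[OF this] show ?thesis unfolding AI2(2) .
  qed
  from has_integral_linear[OF this bounded_linear_vec_nth[of 1]]
  have "((\<lambda>x. (cmod (d (c2 x)))^2) has_integral pi) S"
    by (simp add: o_def)
  then show ?thesis by (simp add: d_def S_def)
qed


definition Kb :: "complex \<Rightarrow> complex \<Rightarrow> real" where
  "Kb z w = (cmod (bergman_k z w))^2 / pi"

lemma berezin_Kb: "berezin g z = integral (ball 0 1) (\<lambda>w. complex_of_real (Kb z w) * g w)"
  unfolding berezin_def Kb_def ..

lemma denom_nz:
  assumes "norm z < 1" "norm w \<le> 1"
  shows "1 - w * cnj z \<noteq> 0"
proof
  assume "1 - w * cnj z = 0"
  then have "w * cnj z = 1" by simp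
  then have "norm w * norm z = 1" by (metis complex_mod_cnj norm_mult norm_one)
  moreover have "norm w * norm z \<le> norm z" using assms(2) by (simp add: mult_left_le_one_le)
  ultimately show False using assms(1) by simp
qed

lemma Kb_nonneg: "Kb z w \<ge> 0"
  unfolding Kb_def by simp

lemma Kb_int:
  assumes z: "norm z < 1"
  shows "(Kb z has_integral 1) (ball 0 1)"
proof -
  have "((\<lambda>w. (cmod (complex_of_real (1 - (cmod z)^2) / (1 - cnj z * c2 (c2i w))^2))^2) has_integral pi)
      (c2 ` ball (0::real^2) 1)"
    by (rule has_integral_c2[OF kernel_integral_real2[OF z]])
  then have "((\<lambda>w. (cmod (bergman_k z w))^2) has_integral pi) (ball 0 1)"
    unfolding c2_c2i c2_ball bergman_k_def by (simp add: mult.commute)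
  then have "((\<lambda>w. (cmod (bergman_k z w))^2 * (1/pi)) has_integral pi * (1/pi)) (ball 0 1)"
    by (rule has_integral_mult_left)
  then show ?thesis unfolding Kb_def by simp
qed

lemma const_int_ball: "((\<lambda>w. c) has_integral c * pi) (ball (0::complex) 1)"
proof -
  have "measure lborel (ball (0::complex) 1) = pi"
    by (simp add: content_ball unit_ball_vol_2)
  moreover have "emeasure lborel (ball (0::complex) 1) < \<infinity>"
    by (rule emeasure_bounded_finite) simp
  ultimately have "((\<lambda>w. 1::real) has_integral pi) (ball (0::complex) 1)"
    using has_integral_measure_lborel[of "ball (0::complex) 1"] by simp
  from has_integral_mult_right[OF this, of c] show ?thesis by (simp add: mult.commute)
qed

lemma Kb_cont: "continuous_on (ball 0 1 \<times> cball 0 1) (\<lambda>p. Kb (fst p) (snd p))"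
proof -
  have "\<And>p. p \<in> ball 0 1 \<times> cball 0 1 \<Longrightarrow> (1 - snd p * cnj (fst p))^2 \<noteq> 0"
    using denom_nz by auto
  then show ?thesis
    unfolding Kb_def bergman_k_def
    by (intro continuous_intros) auto
qed

lemma Kb_cont1:
  assumes "norm z < 1"
  shows "continuous_on (cball 0 1) (Kb z)"
proof -
  have "continuous_on ((\<lambda>w. (z, w)) ` cball 0 1) (\<lambda>p. Kb (fst p) (snd p))"
    by (rule continuous_on_subset[OF Kb_cont]) (use assms in auto)
  from continuous_on_compose[OF _ this] show ?thesis
    by (simp add: o_def continuous_intros)
qed

lemma Kb_lower:
  assumes z: "norm z < 1" and w: "norm w \<le> 1"
  shows "Kb z w \<ge> (1 - (cmod z)^2)^2 / (16 * pi)"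
proof -
  have nz: "1 - w * cnj z \<noteq> 0" by (rule denom_nz[OF z w])
  have "cmod (1 - w * cnj z) \<le> 1 + cmod w * cmod z"
    by (metis complex_mod_cnj norm_mult norm_one norm_triangle_ineq4)
  also have "\<dots> \<le> 2" using z w by (smt (verit) mult_le_one norm_ge_zero)
  finally have le2: "cmod (1 - w * cnj z) \<le> 2" .
  have pos: "cmod (1 - w * cnj z) > 0" using nz by simp
  have a: "1 - (cmod z)^2 \<ge> 0" using z by (simp add: abs_square_le_1 less_imp_le)
  have "cmod (bergman_k z w) = (1 - (cmod z)^2) / (cmod (1 - w * cnj z))^2"
    unfolding bergman_k_def norm_divide norm_power norm_of_real abs_of_nonneg[OF a] ..
  moreover have "(1 - (cmod z)^2) / (cmod (1 - w * cnj z))^2 \<ge> (1 - (cmod z)^2) / 4"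
  proof -
    have "(cmod (1 - w * cnj z))^2 \<le> 2^2" using le2 pos by (intro power_mono) auto
    then show ?thesis using a pos by (intro divide_left_mono) auto
  qed
  ultimately have "cmod (bergman_k z w) \<ge> (1 - (cmod z)^2) / 4" by simp
  then have "(cmod (bergman_k z w))^2 \<ge> ((1 - (cmod z)^2) / 4)^2"
    using a by (intro power_mono) auto
  then have "(1 - (cmod z)^2)^2 / 16 \<le> (cmod (bergman_k z w))^2" by (simp add: power_divide)
  then have "(1 - (cmod z)^2)^2 / 16 / pi \<le> (cmod (bergman_k z w))^2 / pi"
    by (rule divide_right_mono) simp
  then show ?thesis unfolding Kb_def by (simp add: mult.commute)
qed

lemma Kb_upper:
  assumes z: "norm z < 1" and t: "t > 0" and d: "cmod (1 - w * cnj z) \<ge> t"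
  shows "Kb z w \<le> (1 - (cmod z)^2)^2 / (pi * t^4)"
proof -
  have a: "1 - (cmod z)^2 \<ge> 0" using z by (simp add: abs_square_le_1 less_imp_le)
  have "cmod (bergman_k z w) = (1 - (cmod z)^2) / (cmod (1 - w * cnj z))^2"
    unfolding bergman_k_def norm_divide norm_power norm_of_real abs_of_nonneg[OF a] ..
  also have "\<dots> \<le> (1 - (cmod z)^2) / t^2"
    using a t d by (intro divide_left_mono power_mono mult_pos_pos) auto
  finally have "cmod (bergman_k z w) \<le> (1 - (cmod z)^2) / t^2" .
  then have "(cmod (bergman_k z w))^2 \<le> ((1 - (cmod z)^2) / t^2)^2"
    by (intro power_mono) auto
  then show ?thesis unfolding Kb_def
    by (simp add: divide_right_mono power_divide field_simps)
qed

lemma Kb_mult_integrable: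
  assumes z: "norm z < 1" and g: "continuous_on (ball 0 1) g"
    and M: "\<And>w. w \<in> ball 0 1 \<Longrightarrow> norm (g w) \<le> M"
  shows "(\<lambda>w. complex_of_real (Kb z w) * g w) integrable_on ball 0 1"
proof (rule measurable_bounded_by_integrable_imp_integrable)
  have "continuous_on (ball 0 1) (\<lambda>w. complex_of_real (Kb z w) * g w)"
    by (intro continuous_intros continuous_on_subset[OF Kb_cont1[OF z]] g) auto
  then show "(\<lambda>w. complex_of_real (Kb z w) * g w) \<in> borel_measurable (lebesgue_on (ball 0 1))"
    by (rule continuous_imp_measurable_on_sets_lebesgue) simp
  show "(\<lambda>w. Kb z w * M) integrable_on ball 0 1"
    using has_integral_mult_left[OF Kb_int[OF z], of M] by (rule has_integral_integrable)
  show "norm (complex_of_real (Kb z w) * g w) \<le> Kb z w * M" if "w \<in> ball 0 1" for w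
    using M[OF that] Kb_nonneg[of z w] by (simp add: norm_mult mult_left_mono)
qed simp


lemma berezin_has_integral:
  assumes z: "norm z < 1" and phi: "continuous_on (cball 0 1) \<phi>"
    and M: "\<And>w. w \<in> cball 0 1 \<Longrightarrow> norm (\<phi> w) \<le> M"
  shows "((\<lambda>w. complex_of_real (Kb z w) * \<phi> w) has_integral berezin \<phi> z) (ball 0 1)"
proof -
  have "(\<lambda>w. complex_of_real (Kb z w) * \<phi> w) integrable_on ball 0 1"
    by (rule Kb_mult_integrable[OF z continuous_on_subset[OF phi]]) (auto intro: M)
  then show ?thesis unfolding berezin_Kb by (rule integrable_integral)
qed

lemma berezin_interior:
  assumes phi: "continuous_on (cball 0 1) \<phi>"
    and M: "\<And>w. w \<in> cball 0 1 \<Longrightarrow> norm (\<phi> w) \<le> M" and M0: "M \<ge> 0"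
    and z0: "norm z0 < 1" and e: "e > 0"
  shows "\<exists>d>0. \<forall>z. norm z < 1 \<longrightarrow> dist z z0 < d \<longrightarrow> dist (berezin \<phi> z) (berezin \<phi> z0) < e"
proof -
  define r where "r = (1 - norm z0) / 2"
  have r: "r > 0" using z0 by (simp add: r_def)
  define C where "C = cball z0 r \<times> cball (0::complex) 1"
  have CS: "C \<subseteq> ball 0 1 \<times> cball 0 1"
  proof
    fix p assume "p \<in> C"
    then have "dist z0 (fst p) \<le> r" "norm (snd p) \<le> 1" by (auto simp: C_def)
    moreover have "norm (fst p) - norm z0 \<le> dist z0 (fst p)"
      using norm_triangle_ineq2[of "fst p" z0] by (simp add: dist_norm norm_minus_commute)
    moreover have "r < 1 - norm z0" using z0 by (simp add: r_def)
    ultimately have "norm (fst p) < 1" by linarith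
    then show "p \<in> ball 0 1 \<times> cball 0 1" using \<open>norm (snd p) \<le> 1\<close> by (cases p) auto
  qed
  have "uniformly_continuous_on C (\<lambda>p. Kb (fst p) (snd p))"
    by (rule compact_uniformly_continuous[OF continuous_on_subset[OF Kb_cont CS]])
      (simp add: C_def compact_Times)
  moreover define \<eta> where "\<eta> = e / (2 * (M + 1) * pi)"
  moreover have eta: "\<eta> > 0" using e M0 by (simp add: \<eta>_def)
  ultimately obtain d where d: "d > 0"
    and dK: "\<And>p q. p \<in> C \<Longrightarrow> q \<in> C \<Longrightarrow> dist q p < d \<Longrightarrow> dist (Kb (fst q) (snd q)) (Kb (fst p) (snd p)) < \<eta>"
    unfolding uniformly_continuous_on_def by metis
  show ?thesis
  proof (intro exI[of _ "min d r"] conjI allI impI)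
    show "min d r > 0" using d r by simp
    fix z assume z: "norm z < 1" and dz: "dist z z0 < min d r"
    have B0: "((\<lambda>w. complex_of_real (Kb z0 w) * \<phi> w) has_integral berezin \<phi> z0) (ball 0 1)"
      by (rule berezin_has_integral[OF z0 phi M])
    have B1: "((\<lambda>w. complex_of_real (Kb z w) * \<phi> w) has_integral berezin \<phi> z) (ball 0 1)"
      by (rule berezin_has_integral[OF z phi M])
    have D: "((\<lambda>w. complex_of_real (Kb z w) * \<phi> w - complex_of_real (Kb z0 w) * \<phi> w)
         has_integral (berezin \<phi> z - berezin \<phi> z0)) (ball 0 1)"
      by (rule has_integral_diff[OF B1 B0])
    have G: "((\<lambda>w. \<eta> * M) has_integral \<eta> * M * pi) (ball (0::complex) 1)"
      by (rule const_int_ball)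
    have bound: "norm (complex_of_real (Kb z w) * \<phi> w - complex_of_real (Kb z0 w) * \<phi> w) \<le> \<eta> * M"
      if w: "w \<in> ball 0 1" for w
    proof -
      have "(z0, w) \<in> C" "(z, w) \<in> C" using w dz r by (auto simp: C_def dist_commute)
      moreover have "dist (z, w) (z0, w) < d" using dz by (simp add: dist_Pair_Pair)
      ultimately have "dist (Kb z w) (Kb z0 w) < \<eta>" using dK by fastforce
      then have "\<bar>Kb z w - Kb z0 w\<bar> \<le> \<eta>" by (simp add: dist_real_def)
      moreover have "norm (\<phi> w) \<le> M" using w M by auto
      moreover have "complex_of_real (Kb z w) * \<phi> w - complex_of_real (Kb z0 w) * \<phi> w
          = complex_of_real (Kb z w - Kb z0 w) * \<phi> w" by (simp add: algebra_simps)
      then have "norm (complex_of_real (Kb z w) * \<phi> w - complex_of_real (Kb z0 w) * \<phi> w)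
          = \<bar>Kb z w - Kb z0 w\<bar> * norm (\<phi> w)" by (simp only: norm_mult norm_of_real)
      ultimately show ?thesis
        using eta by (simp add: mult_mono)
    qed
    have "norm (berezin \<phi> z - berezin \<phi> z0) \<le> \<eta> * M * pi"
      using integral_norm_bound_integral[OF has_integral_integrable[OF D] has_integral_integrable[OF G] bound]
      unfolding integral_unique[OF D] integral_unique[OF G] .
    also have "\<dots> < e"
    proof -
      have M1: "M + 1 \<noteq> 0" using M0 by simp
      have "\<eta> * M * pi = e * M / (2 * (M + 1))" using M1 by (simp add: \<eta>_def)
      also have "\<dots> < e"
      proof -
        have "e * M < e * (2 * (M + 1))" using e M0 by (intro mult_strict_left_mono) auto
        then show ?thesis using M0 by (simp add: divide_less_eq)
      qed
      finally show ?thesis .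
    qed
    finally show "dist (berezin \<phi> z) (berezin \<phi> z0) < e" by (simp add: dist_norm)
  qed
qed


lemma one_minus_sq_le:
  assumes z: "norm z < 1" and zeta: "norm \<zeta> = 1"
  shows "1 - (cmod z)^2 \<le> 2 * dist z \<zeta>"
proof -
  have a: "1 - cmod z \<le> dist z \<zeta>"
    using norm_triangle_ineq2[of \<zeta> z] zeta by (simp add: dist_norm norm_minus_commute)
  have "1 - (cmod z)^2 = (1 - cmod z) * (1 + cmod z)" by (simp add: power2_eq_square algebra_simps)
  also have "\<dots> \<le> (1 - cmod z) * 2"
    using z by (intro mult_left_mono) auto
  also have "\<dots> \<le> 2 * dist z \<zeta>" using a by simp
  finally show ?thesis .
qed

lemma denom_lower:
  assumes zeta: "norm \<zeta> = 1" and w: "norm w \<le> 1"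
  shows "cmod (1 - w * cnj z) \<ge> dist w \<zeta> - dist z \<zeta>"
proof -
  have c: "cnj \<zeta> * \<zeta> = 1"
    using zeta by (metis complex_norm_square mult.commute of_real_1 power_one)
  have eq: "1 - w * cnj z = cnj \<zeta> * (\<zeta> - w) + w * (cnj \<zeta> - cnj z)"
    using c by (simp add: algebra_simps)
  have n1: "cmod (cnj \<zeta> * (\<zeta> - w)) = dist w \<zeta>"
    using zeta by (simp add: norm_mult dist_norm norm_minus_commute)
  have "cmod (w * (cnj \<zeta> - cnj z)) = cmod w * dist z \<zeta>"
    by (simp add: norm_mult dist_norm norm_minus_commute flip: complex_cnj_diff)
  also have "\<dots> \<le> dist z \<zeta>" using w by (simp add: mult_left_le_one_le)
  finally have n2: "cmod (w * (cnj \<zeta> - cnj z)) \<le> dist z \<zeta>" .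
  have "cmod (cnj \<zeta> * (\<zeta> - w)) - cmod (w * (cnj \<zeta> - cnj z)) \<le> cmod (1 - w * cnj z)"
    unfolding eq by (metis norm_diff_ineq norm_minus_cancel diff_minus_eq_add)
  then show ?thesis using n1 n2 by linarith
qed

lemma berezin_boundary:
  assumes phi: "continuous_on (cball 0 1) \<phi>"
    and M: "\<And>w. w \<in> cball 0 1 \<Longrightarrow> norm (\<phi> w) \<le> M" and M0: "M \<ge> 0"
    and zeta: "norm \<zeta> = 1" and e: "e > 0"
  shows "\<exists>d>0. \<forall>z. norm z < 1 \<longrightarrow> dist z \<zeta> < d \<longrightarrow> dist (berezin \<phi> z) (\<phi> \<zeta>) < e"
proof -
  have "\<zeta> \<in> cball 0 1" using zeta by simp
  with phi[unfolded continuous_on_iff] e obtain \<eta> where eta: "\<eta> > 0"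
    and h\<eta>: "\<And>w. w \<in> cball 0 1 \<Longrightarrow> dist w \<zeta> < \<eta> \<Longrightarrow> dist (\<phi> w) (\<phi> \<zeta>) < e/2"
    by (metis half_gt_zero)
  define \<delta> where "\<delta> = min (min (\<eta>/2) 1) (e * \<eta>^4 / (256 * (M+1)))"
  have \<delta>: "\<delta> > 0" using eta e M0 by (simp add: \<delta>_def)
  show ?thesis
  proof (intro exI[of _ \<delta>] conjI allI impI \<delta>)
    fix z assume z: "norm z < 1" and dz: "dist z \<zeta> < \<delta>"
    define t where "t = dist z \<zeta>"
    have t0: "t \<ge> 0" by (simp add: t_def)
    have t1: "t < \<eta>/2" "t < 1" "t < e * \<eta>^4 / (256 * (M+1))"
      using dz by (auto simp: t_def \<delta>_def)
    define C where "C = 128 * M * t^2 / (pi * \<eta>^4)"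
    have C0: "C \<ge> 0" using M0 by (simp add: C_def)
    have bound: "norm (complex_of_real (Kb z w) * \<phi> w - complex_of_real (Kb z w) * \<phi> \<zeta>)
        \<le> Kb z w * (e/2) + C" if w: "w \<in> ball 0 1" for w
    proof -
      have eqn: "norm (complex_of_real (Kb z w) * \<phi> w - complex_of_real (Kb z w) * \<phi> \<zeta>)
          = Kb z w * norm (\<phi> w - \<phi> \<zeta>)"
        using Kb_nonneg[of z w]
        by (simp add: norm_mult flip: right_diff_distrib)
      show ?thesis
      proof (cases "dist w \<zeta> < \<eta>")
        case True
        then have "norm (\<phi> w - \<phi> \<zeta>) \<le> e/2" using h\<eta>[of w] w by (simp add: dist_norm)
        then have "Kb z w * norm (\<phi> w - \<phi> \<zeta>) \<le> Kb z w * (e/2)"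
          using Kb_nonneg[of z w] by (rule mult_left_mono)
        then show ?thesis using eqn C0 by simp
      next
        case False
        have "cmod (1 - w * cnj z) \<ge> \<eta>/2"
          using denom_lower[OF zeta, of w z] w False t1(1) by (simp add: t_def)
        then have "Kb z w \<le> (1 - (cmod z)^2)^2 / (pi * (\<eta>/2)^4)"
          by (intro Kb_upper[OF z]) (use eta in auto)
        also have "\<dots> \<le> (2 * t)^2 / (pi * (\<eta>/2)^4)"
        proof -
          have "0 \<le> 1 - (cmod z)^2" using z by (simp add: abs_square_le_1 less_imp_le)
          moreover have "1 - (cmod z)^2 \<le> 2 * t" using one_minus_sq_le[OF z zeta] by (simp add: t_def)
          ultimately have "(1 - (cmod z)^2)^2 \<le> (2 * t)^2" by (intro power_mono)
          then show ?thesis using eta by (intro divide_right_mono) auto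
        qed
        also have "\<dots> = 64 * t^2 / (pi * \<eta>^4)" by (simp add: power_divide field_simps)
        finally have K: "Kb z w \<le> 64 * t^2 / (pi * \<eta>^4)" .
        have "norm (\<phi> w - \<phi> \<zeta>) \<le> norm (\<phi> w) + norm (\<phi> \<zeta>)" by (rule norm_triangle_ineq4)
        also have "\<dots> \<le> 2 * M" using M[of w] M[of \<zeta>] w zeta by simp
        finally have P: "norm (\<phi> w - \<phi> \<zeta>) \<le> 2 * M" .
        have "Kb z w * norm (\<phi> w - \<phi> \<zeta>) \<le> (64 * t^2 / (pi * \<eta>^4)) * (2 * M)"
          using K P Kb_nonneg[of z w] by (intro mult_mono) auto
        also have "\<dots> = C" by (simp add: C_def)
        finally show ?thesis using eqn Kb_nonneg[of z w] e by (simp add: add_increasing)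
      qed
    qed
    have B1: "((\<lambda>w. complex_of_real (Kb z w) * \<phi> w) has_integral berezin \<phi> z) (ball 0 1)"
      by (rule berezin_has_integral[OF z phi M])
    have Kc: "((\<lambda>w. complex_of_real (Kb z w) * \<phi> \<zeta>) has_integral complex_of_real 1 * \<phi> \<zeta>) (ball 0 1)"
      by (rule has_integral_mult_left[OF has_integral_of_real[OF Kb_int[OF z]]])
    have D: "((\<lambda>w. complex_of_real (Kb z w) * \<phi> w - complex_of_real (Kb z w) * \<phi> \<zeta>)
        has_integral (berezin \<phi> z - \<phi> \<zeta>)) (ball 0 1)"
      using has_integral_diff[OF B1 Kc] by simp
    have G: "((\<lambda>w. Kb z w * (e/2) + C) has_integral (1 * (e/2) + C * pi)) (ball 0 1)"
      by (rule has_integral_add[OF has_integral_mult_left[OF Kb_int[OF z]] const_int_ball])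
    have "norm (berezin \<phi> z - \<phi> \<zeta>) \<le> 1 * (e/2) + C * pi"
      using integral_norm_bound_integral[OF has_integral_integrable[OF D] has_integral_integrable[OF G] bound]
      unfolding integral_unique[OF D] integral_unique[OF G] .
    also have "\<dots> < e"
    proof -
      have "C * pi = 128 * M * t^2 / \<eta>^4" by (simp add: C_def)
      also have "\<dots> \<le> 128 * M * t / \<eta>^4"
      proof -
        have "t^2 \<le> t" using t0 t1(2) by (simp add: power2_eq_square mult_le_cancel_right1 mult_left_le_one_le)
        then show ?thesis using M0 eta by (intro divide_right_mono mult_left_mono) auto
      qed
      also have "\<dots> \<le> 128 * M * (e * \<eta>^4 / (256 * (M+1))) / \<eta>^4"
        using M0 eta t1(3) by (intro divide_right_mono mult_left_mono) auto
      also have "\<dots> = e * M / (2 * (M + 1))"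
      proof -
        have q: "\<eta>^4 \<noteq> 0" using eta by auto
        have "128 * M * (e * \<eta>^4 / (256 * (M+1))) = (128 * M * e / (256 * (M+1))) * \<eta>^4"
          by simp
        then have "128 * M * (e * \<eta>^4 / (256 * (M+1))) / \<eta>^4 = 128 * M * e / (256 * (M+1))"
          using q by simp
        also have "\<dots> = (128 * (e * M)) / (128 * (2 * (M + 1)))" by (simp add: mult.commute mult.left_commute)
        also have "\<dots> = e * M / (2 * (M + 1))" by (rule mult_divide_mult_cancel_left) simp
        finally show ?thesis .
      qed
      also have "\<dots> < e / 2"
      proof -
        show ?thesis using e M0 by (simp add: divide_less_eq algebra_simps)
      qed
      finally show ?thesis by simp
    qed
    finally show "dist (berezin \<phi> z) (\<phi> \<zeta>) < e" by (simp add: dist_norm)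
  qed
qed


lemma berezin_nonzero:
  assumes phi: "continuous_on (cball 0 1) \<phi>"
    and M: "\<And>w. w \<in> cball 0 1 \<Longrightarrow> norm (\<phi> w) \<le> M"
    and hyp: "\<forall>z\<in>ball 0 1. Re (\<phi> z) \<ge> (\<bar>Im (\<phi> z)\<bar>)^2"
    and z: "norm z < 1" and w0: "w0 \<in> ball 0 1" and nz: "\<phi> w0 \<noteq> 0"
  shows "berezin \<phi> z \<noteq> 0"
proof -
  have Re0: "Re (\<phi> w) \<ge> 0" if "w \<in> ball 0 1" for w
    using hyp that by (metis (no_types) order_trans zero_le_power2)
  define a where "a = Re (\<phi> w0)"
  have a: "a > 0"
  proof (rule ccontr)
    assume "\<not> a > 0"
    then have "a = 0" using Re0[OF w0] by (simp add: a_def)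
    then have "(\<bar>Im (\<phi> w0)\<bar>)^2 \<le> 0" using hyp w0 unfolding a_def by metis
    then have "Im (\<phi> w0) = 0" by simp
    with \<open>a = 0\<close> have "\<phi> w0 = 0" by (simp add: a_def complex_eq_iff)
    with nz show False ..
  qed
  have "w0 \<in> cball 0 1" using w0 by simp
  with phi[unfolded continuous_on_iff] a obtain r where r: "r > 0"
    and hr: "\<And>w. w \<in> cball 0 1 \<Longrightarrow> dist w w0 < r \<Longrightarrow> dist (\<phi> w) (\<phi> w0) < a/2"
    by (metis half_gt_zero)
  define \<rho> where "\<rho> = min r (1 - norm w0)"
  have \<rho>: "\<rho> > 0" using r w0 by (simp add: \<rho>_def)
  have sub: "ball w0 \<rho> \<subseteq> ball 0 1"
  proof
    fix w assume "w \<in> ball w0 \<rho>"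
    then have "dist w0 w < 1 - norm w0" by (simp add: \<rho>_def)
    moreover have "norm w - norm w0 \<le> dist w0 w"
      using norm_triangle_ineq2[of w w0] by (simp add: dist_norm norm_minus_commute)
    ultimately show "w \<in> ball 0 1" by simp
  qed
  define c0 where "c0 = (1 - (cmod z)^2)^2 / (16 * pi)"
  have c0: "c0 > 0"
  proof -
    have "(cmod z)^2 < 1" using z by (simp add: power_less_one_iff abs_square_less_1)
    then show ?thesis by (simp add: c0_def)
  qed
  define h where "h w = (if w \<in> ball w0 \<rho> then c0 * (a/2) else 0)" for w
  have "((\<lambda>w. 1::real) has_integral measure lborel (ball w0 \<rho>)) (ball w0 \<rho>)"
    by (rule has_integral_measure_lborel) (use emeasure_bounded_finite[of "ball w0 \<rho>"] in simp_all)
  then have "((\<lambda>w. 1 * (c0 * (a/2))) has_integral measure lborel (ball w0 \<rho>) * (c0 * (a/2))) (ball w0 \<rho>)"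
    by (rule has_integral_mult_left)
  then have "(h has_integral measure lborel (ball w0 \<rho>) * (c0 * (a/2))) (ball w0 \<rho>)"
    by (rule has_integral_eq[rotated]) (simp add: h_def)
  then have H: "(h has_integral measure lborel (ball w0 \<rho>) * (c0 * (a/2))) (ball 0 1)"
    by (rule has_integral_on_superset[OF _ _ sub]) (simp add: h_def)
  have B: "((\<lambda>w. complex_of_real (Kb z w) * \<phi> w) has_integral berezin \<phi> z) (ball 0 1)"
    by (rule berezin_has_integral[OF z phi M])
  from has_integral_linear[OF B bounded_linear_Re]
  have R: "((\<lambda>w. Kb z w * Re (\<phi> w)) has_integral Re (berezin \<phi> z)) (ball 0 1)"
    by (simp add: o_def)
  have le: "h w \<le> Kb z w * Re (\<phi> w)" if w: "w \<in> ball 0 1" for w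
  proof (cases "w \<in> ball w0 \<rho>")
    case True
    then have "dist w w0 < r" by (simp add: \<rho>_def dist_commute)
    then have "dist (\<phi> w) (\<phi> w0) < a/2" using hr w by simp
    then have "\<bar>Re (\<phi> w) - Re (\<phi> w0)\<bar> < a/2"
      using abs_Re_le_cmod[of "\<phi> w - \<phi> w0"] by (simp add: dist_norm)
    then have "Re (\<phi> w) \<ge> a/2" unfolding a_def by linarith
    moreover have "Kb z w \<ge> c0" unfolding c0_def by (rule Kb_lower[OF z]) (use w in simp)
    ultimately have "c0 * (a/2) \<le> Kb z w * Re (\<phi> w)"
      using c0 a by (intro mult_mono) auto
    then show ?thesis using True by (simp add: h_def)
  next
    case False
    then show ?thesis using Re0[OF w] Kb_nonneg[of z w] by (simp add: h_def)
  qed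
  have "measure lborel (ball w0 \<rho>) * (c0 * (a/2)) \<le> Re (berezin \<phi> z)"
    by (rule has_integral_le[OF H R le])
  moreover have "measure lborel (ball w0 \<rho>) * (c0 * (a/2)) > 0"
    using content_ball_pos[OF \<rho>, of w0] c0 a by simp
  ultimately have "Re (berezin \<phi> z) > 0" by linarith
  then show ?thesis by auto
qed


theorem lemma5p5:
  fixes \<phi> :: "complex \<Rightarrow> complex"
  assumes "continuous_on (cball 0 1) \<phi>"
    and "\<forall>z\<in>ball 0 1. Re (\<phi> z) \<ge> (\<bar>Im (\<phi> z)\<bar>)^2"
  shows "\<exists>F. continuous_on (cball 0 1) F \<and> (\<forall>z\<in>ball 0 1. F z = berezin \<phi> z) \<and>
           ((\<exists>\<delta>>0. \<forall>z\<in>sphere 0 1. \<delta> \<le> cmod (F z)) \<longrightarrow>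
              (\<exists>c>0. \<forall>z\<in>ball 0 1. c \<le> cmod (berezin \<phi> z)))"
proof -
  note phi = assms(1) and hyp = assms(2)
  have "bounded (\<phi> ` cball 0 1)"
    by (rule compact_imp_bounded[OF compact_continuous_image[OF phi compact_cball]])
  then obtain M where M0': "M > 0" and M': "\<forall>y\<in>\<phi> ` cball 0 1. norm y \<le> M"
    unfolding bounded_pos by blast
  have M: "norm (\<phi> w) \<le> M" if "w \<in> cball 0 1" for w using M' that by blast
  have M0: "M \<ge> 0" using M0' by simp
  define F where "F z = (if z \<in> ball 0 1 then berezin \<phi> z else \<phi> z)" for z
  have contF: "continuous_on (cball 0 1) F"
    unfolding continuous_on_iff
  proof (intro ballI allI impI)
    fix x :: complex and e :: real assume x: "x \<in> cball (0::complex) 1" and e: "(e::real) > 0"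
    show "\<exists>d>0. \<forall>x'\<in>cball 0 1. dist x' x < d \<longrightarrow> dist (F x') (F x) < e"
    proof (cases "norm x < 1")
      case True
      obtain d where d: "d > 0"
        and hd: "\<forall>z. norm z < 1 \<longrightarrow> dist z x < d \<longrightarrow> dist (berezin \<phi> z) (berezin \<phi> x) < e"
        using berezin_interior[OF phi M M0 True e] by blast
      show ?thesis
      proof (intro exI[of _ "min d (1 - norm x)"] conjI ballI impI)
        show "min d (1 - norm x) > 0" using d True by simp
        fix x' :: complex assume "x' \<in> cball 0 1" and dx: "dist x' x < min d (1 - norm x)"
        have "norm x' - norm x \<le> dist x' x"
          using norm_triangle_ineq2[of x' x] by (simp add: dist_norm)
        then have x': "norm x' < 1" using dx by simp
        then show "dist (F x') (F x) < e" using hd dx True by (simp add: F_def)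
      qed
    next
      case False
      then have nx: "norm x = 1" using x by simp
      obtain d1 where d1: "d1 > 0"
        and h1: "\<forall>z. norm z < 1 \<longrightarrow> dist z x < d1 \<longrightarrow> dist (berezin \<phi> z) (\<phi> x) < e"
        using berezin_boundary[OF phi M M0 nx e] by blast
      obtain d2 where d2: "d2 > 0"
        and h2: "\<forall>x'\<in>cball 0 1. dist x' x < d2 \<longrightarrow> dist (\<phi> x') (\<phi> x) < e"
        using phi[unfolded continuous_on_iff] x e by blast
      show ?thesis
      proof (intro exI[of _ "min d1 d2"] conjI ballI impI)
        show "min d1 d2 > 0" using d1 d2 by simp
        fix x' :: complex assume x': "x' \<in> cball 0 1" and dx: "dist x' x < min d1 d2"
        show "dist (F x') (F x) < e"
        proof (cases "norm x' < 1")
          case True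
          then show ?thesis using h1 dx nx by (simp add: F_def)
        next
          case False
          then show ?thesis using h2 x' dx nx by (simp add: F_def)
        qed
      qed
    qed
  qed
  show ?thesis
  proof (intro exI[of _ F] conjI ballI impI)
    show "continuous_on (cball 0 1) F" by (rule contF)
    show "F z = berezin \<phi> z" if "z \<in> ball 0 1" for z :: complex using that by (simp add: F_def)
    assume "\<exists>\<delta>>0. \<forall>z\<in>sphere 0 1. \<delta> \<le> cmod (F z)"
    then obtain \<delta> where \<delta>: "\<delta> > 0" and h\<delta>: "\<And>z. z \<in> sphere 0 1 \<Longrightarrow> \<delta> \<le> cmod (F z)" by blast
    have ex: "\<exists>w0\<in>ball 0 1. \<phi> w0 \<noteq> 0"
    proof (rule ccontr)
      assume "\<not> (\<exists>w0\<in>ball 0 1. \<phi> w0 \<noteq> 0)"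
      then have z0: "\<And>w. w \<in> ball 0 1 \<Longrightarrow> \<phi> w = 0" by blast
      have cl: "closure (ball (0::complex) 1) = cball 0 1" by simp
      have "\<phi> 1 = 0"
        by (rule continuous_constant_on_closure[of "ball 0 1"]) (use phi z0 in simp_all)
      moreover have "(1::complex) \<in> sphere 0 1" by simp
      ultimately have "\<delta> \<le> 0" using h\<delta>[of 1] by (simp add: F_def)
      with \<delta> show False by simp
    qed
    then obtain w0 where w0: "w0 \<in> ball 0 1" "\<phi> w0 \<noteq> 0" by blast
    have Fnz: "F z \<noteq> 0" if z: "z \<in> cball 0 1" for z
    proof (cases "norm z < 1")
      case True
      then show ?thesis using berezin_nonzero[OF phi M hyp True w0] by (simp add: F_def)
    next
      case False
      then have "z \<in> sphere 0 1" using z by simp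
      then show ?thesis using h\<delta>[of z] \<delta> by auto
    qed
    have "continuous_on (cball 0 1) (\<lambda>z. cmod (F z))"
      by (intro continuous_intros contF)
    then obtain x0 where x0: "x0 \<in> cball 0 1" and hx0: "\<And>y. y \<in> cball 0 1 \<Longrightarrow> cmod (F x0) \<le> cmod (F y)"
      using continuous_attains_inf[OF compact_cball, of 0 1 "\<lambda>z. cmod (F z)"] by auto
    show "\<exists>c>0. \<forall>z\<in>ball 0 1. c \<le> cmod (berezin \<phi> z)"
    proof (intro exI[of _ "cmod (F x0)"] conjI ballI)
      show "cmod (F x0) > 0" using Fnz[OF x0] by simp
      fix z :: complex assume "z \<in> ball 0 1"
      then show "cmod (F x0) \<le> cmod (berezin \<phi> z)" using hx0[of z] by (simp add: F_def)
    qed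
  qed
qed

end
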